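(* Let $\ell\in\{2,3\}$ and let $G\subseteq\Delta_2(\mathbb{F}_\ell)$ be a subgroup with $\operatorname{pr}_i(G)=\operatorname{GL}_2(\mathbb{F}_\ell)$ for each $i\in\{1,2\}$. Then $G=\Delta_2(\mathbb{F}_\ell)$ if and only if there exists $(g_1,g_2)\in G$ with $(\dim_1g_1,\dim_1g_2)\in\{(0,1),(1,0),(1,2),(2,1)\}$ when $\ell=2$, respectively $(\dim_1g_1,\dim_1g_2)\in\{(1,2),(2,1)\}$ when $\ell=3$.
   Context: $\Delta_2(\mathbb{F}_\ell)=\{(g_1,g_2)\in\operatorname{GL}_2(\mathbb{F}_\ell)^2:\det g_1=\det g_2\}$; $\operatorname{pr}_i$ is the projection onto the $i$-th factor; for $g\in\operatorname{GL}_2(\mathbb{F}_\ell)$, $\dim_1g=\dim_{\mathbb{F}_\ell}\ker(g-I)$. *)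

theory Defs
  imports "HOL-Algebra.Group"
begin

text \<open>F_l is modelled as the residues {0..<l} (l prime); a 2x2 matrix
 [[a,b],[c,d]] over F_l is the tuple (a,b,c,d).\<close>

type_synonym mat2 = "int \<times> int \<times> int \<times> int"

definition Fl :: "int \<Rightarrow> int set" where
  "Fl l = {0..<l}"

fun mmul :: "int \<Rightarrow> mat2 \<Rightarrow> mat2 \<Rightarrow> mat2" where
  "mmul l (a,b,c,d) (e,f,g,h) =
     ((a*e+b*g) mod l, (a*f+b*h) mod l, (c*e+d*g) mod l, (c*f+d*h) mod l)"

fun mdet :: "int \<Rightarrow> mat2 \<Rightarrow> int" where
  "mdet l (a,b,c,d) = (a*d - b*c) mod l"

definition mone :: mat2 where
  "mone = (1,0,0,1)"

definition GL2 :: "int \<Rightarrow> mat2 set" where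
  "GL2 l = {(a,b,c,d). a \<in> Fl l \<and> b \<in> Fl l \<and> c \<in> Fl l \<and> d \<in> Fl l
                        \<and> mdet l (a,b,c,d) \<noteq> 0}"

definition Delta2 :: "int \<Rightarrow> (mat2 \<times> mat2) set" where
  "Delta2 l = {(g1,g2). g1 \<in> GL2 l \<and> g2 \<in> GL2 l \<and> mdet l g1 = mdet l g2}"

definition Delta2_grp :: "int \<Rightarrow> (mat2 \<times> mat2) monoid" where
  "Delta2_grp l = \<lparr> carrier = Delta2 l,
      mult = (\<lambda>x y. (mmul l (fst x) (fst y), mmul l (snd x) (snd y))),
      one = (mone, mone) \<rparr>"

fun ker1 :: "int \<Rightarrow> mat2 \<Rightarrow> (int \<times> int) set" where
  "ker1 l (a,b,c,d) = {(x,y). x \<in> Fl l \<and> y \<in> Fl l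
      \<and> ((a-1)*x + b*y) mod l = 0 \<and> (c*x + (d-1)*y) mod l = 0}"

text \<open>dim_1 g = dim_{F_l} ker(g - I), i.e. the d with |ker(g-I)| = l^d\<close>
definition dim1 :: "int \<Rightarrow> mat2 \<Rightarrow> nat" where
  "dim1 l g = (THE d::nat. card (ker1 l g) = nat l ^ d)"

end

theory Submission
  imports Defs
begin
lemma mmul_assoc0: "mmul l (mmul l (a,b,c,d) (e,f,g,h)) (i,j,k,m) = mmul l (a,b,c,d) (mmul l (e,f,g,h) (i,j,k,m))"
  apply (simp only: mmul.simps prod.inject mod_eq_dvd_iff dvd_def)
  apply (simp only: minus_div_mult_eq_mod[symmetric])
  apply (intro conjI; algebra)
  done
lemma mmul_assoc: "mmul l (mmul l x y) z = mmul l x (mmul l y z)"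
  by (cases x; cases y; cases z) (simp only: mmul_assoc0)
lemma mdet_mmul0: "mdet l (mmul l (a,b,c,d) (e,f,g,h)) = (mdet l (a,b,c,d) * mdet l (e,f,g,h)) mod l"
  apply (simp only: mmul.simps mdet.simps mod_mod_trivial mod_eq_dvd_iff dvd_def)
  apply (simp only: minus_div_mult_eq_mod[symmetric])
  apply algebra
  done
lemma mdet_mmul: "mdet l (mmul l x y) = (mdet l x * mdet l y) mod l"
  by (cases x; cases y) (simp only: mdet_mmul0)
definition ginv :: "int \<Rightarrow> mat2 \<Rightarrow> mat2" where
  "ginv l g = (case g of (a,b,c,d) \<Rightarrow> 
      ((mdet l g*d) mod l, (-(mdet l g*b)) mod l, (-(mdet l g*c)) mod l, (mdet l g*a) mod l))"

lemma ginv_l00: "mmul l (ginv l (a,b,c,d)) (a,b,c,d) = ((mdet l (a,b,c,d) * mdet l (a,b,c,d)) mod l, 0 mod l, 0 mod l, (mdet l (a,b,c,d) * mdet l (a,b,c,d)) mod l)"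
  apply (simp only: ginv_def prod.case mmul.simps mdet.simps prod.inject mod_eq_dvd_iff dvd_def)
  apply (simp only: minus_div_mult_eq_mod[symmetric])
  apply (intro conjI; algebra)
  done
lemma ginv_r00: "mmul l (a,b,c,d) (ginv l (a,b,c,d)) = ((mdet l (a,b,c,d) * mdet l (a,b,c,d)) mod l, 0 mod l, 0 mod l, (mdet l (a,b,c,d) * mdet l (a,b,c,d)) mod l)"
  apply (simp only: ginv_def prod.case mmul.simps mdet.simps prod.inject mod_eq_dvd_iff dvd_def)
  apply (simp only: minus_div_mult_eq_mod[symmetric])
  apply (intro conjI; algebra)
  done
lemma ginv_det0: "mdet l (ginv l (a,b,c,d)) = (mdet l (a,b,c,d) * mdet l (a,b,c,d) * mdet l (a,b,c,d)) mod l"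
  apply (simp only: ginv_def prod.case mdet.simps mod_eq_dvd_iff dvd_def)
  apply (simp only: minus_div_mult_eq_mod[symmetric])
  apply algebra
  done
lemma ginv_l0: "mmul l (ginv l (a,b,c,d)) (a,b,c,d) = ((mdet l (a,b,c,d) * mdet l (a,b,c,d)) mod l, 0, 0, (mdet l (a,b,c,d) * mdet l (a,b,c,d)) mod l)"
  using ginv_l00[of l a b c d] by simp
lemma ginv_r0: "mmul l (a,b,c,d) (ginv l (a,b,c,d)) = ((mdet l (a,b,c,d) * mdet l (a,b,c,d)) mod l, 0, 0, (mdet l (a,b,c,d) * mdet l (a,b,c,d)) mod l)"
  using ginv_r00[of l a b c d] by simp

lemma l23: "l \<in> {2,3} \<Longrightarrow> (e::int) \<in> {0..<l} \<Longrightarrow> e \<noteq> 0 \<Longrightarrow> (e*e) mod l = 1"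
  proof -
  assume "l \<in> {2,3}" "e \<in> {0..<l}" "e \<noteq> 0"
  then have "(e = 1 \<and> l = 2) \<or> (e = 1 \<and> l = 3) \<or> (e = 2 \<and> l = 3)" by auto
  then show ?thesis by auto
qed

lemma l23b: "l \<in> {2,3} \<Longrightarrow> (e::int) \<in> {0..<l} \<Longrightarrow> e \<noteq> 0 \<Longrightarrow> (f::int) \<in> {0..<l} \<Longrightarrow> f \<noteq> 0 \<Longrightarrow> (e*f) mod l \<noteq> 0"
  by (auto; subgoal_tac "e = 1 \<or> e = 2"; subgoal_tac "f = 1 \<or> f = 2"; auto)

lemma mone_mul: "l > 0 \<Longrightarrow> x \<in> GL2 l \<Longrightarrow> mmul l mone x = x \<and> mmul l x mone = x"
  by (auto simp: GL2_def mone_def Fl_def)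

lemma mdet_range: "l > 0 \<Longrightarrow> mdet l x \<in> {0..<l}"
  by (cases x) auto

lemma mdet_GL2: "x \<in> GL2 l \<Longrightarrow> mdet l x \<noteq> 0"
  by (auto simp: GL2_def)

lemma GL2_mmul: assumes "l \<in> {2,3}" "x \<in> GL2 l" "y \<in> GL2 l" shows "mmul l x y \<in> GL2 l"
proof -
  have l: "l > 0" using assms by auto
  have "(mdet l x * mdet l y) mod l \<noteq> 0" 
    using l23b[OF assms(1) mdet_range[OF l] mdet_GL2[OF assms(2)] mdet_range[OF l] mdet_GL2[OF assms(3)]] .
  then show ?thesis using l mdet_mmul[of l x y]
    by (cases x; cases y) (auto simp: GL2_def Fl_def)
qed

lemma ginv_props: assumes "l \<in> {2,3}" "x \<in> GL2 l"
  shows "ginv l x \<in> GL2 l" "mmul l (ginv l x) x = mone" "mmul l x (ginv l x) = mone"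
    "mdet l (ginv l x) = mdet l x"
proof -
  have l: "l > 0" using assms by auto
  obtain a b c d where x: "x = (a,b,c,d)" by (cases x)
  have ee: "(mdet l x * mdet l x) mod l = 1" using l23[OF assms(1) mdet_range[OF l] mdet_GL2[OF assms(2)]] .
  show "mmul l (ginv l x) x = mone" using ginv_l0[of l a b c d] ee x by (simp add: mone_def)
  show "mmul l x (ginv l x) = mone" using ginv_r0[of l a b c d] ee x by (simp add: mone_def)
  have "mdet l (ginv l x) = (mdet l x * mdet l x * mdet l x) mod l" using ginv_det0[of l a b c d] x by simp
  also have "\<dots> = ((mdet l x * mdet l x) mod l * mdet l x) mod l" by (simp add: mod_simps)
  also have "\<dots> = mdet l x" using ee mdet_range[OF l, of x] by simp
  finally show dd: "mdet l (ginv l x) = mdet l x" .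
  show "ginv l x \<in> GL2 l" using dd mdet_GL2[OF assms(2)] l x
    by (auto simp: GL2_def Fl_def ginv_def)
qed

lemma mone_GL2: "l \<in> {2,3} \<Longrightarrow> mone \<in> GL2 l"
  by (auto simp: GL2_def mone_def Fl_def)

lemma grpD: assumes "l \<in> {2,3}" shows "group (Delta2_grp l)"
proof (rule groupI)
  have l: "l > 0" using assms by auto
  show "\<one>\<^bsub>Delta2_grp l\<^esub> \<in> carrier (Delta2_grp l)"
    using mone_GL2[OF assms] by (simp add: Delta2_grp_def Delta2_def)
  fix x y z assume x: "x \<in> carrier (Delta2_grp l)" and y: "y \<in> carrier (Delta2_grp l)"
     and z: "z \<in> carrier (Delta2_grp l)"
  show "x \<otimes>\<^bsub>Delta2_grp l\<^esub> y \<in> carrier (Delta2_grp l)"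
    using x y GL2_mmul[OF assms] mdet_mmul by (auto simp: Delta2_grp_def Delta2_def)
  show "x \<otimes>\<^bsub>Delta2_grp l\<^esub> y \<otimes>\<^bsub>Delta2_grp l\<^esub> z = x \<otimes>\<^bsub>Delta2_grp l\<^esub> (y \<otimes>\<^bsub>Delta2_grp l\<^esub> z)"
    by (simp add: Delta2_grp_def mmul_assoc)
  show "\<one>\<^bsub>Delta2_grp l\<^esub> \<otimes>\<^bsub>Delta2_grp l\<^esub> x = x"
    using x mone_mul[OF l] by (auto simp: Delta2_grp_def Delta2_def)
  show "\<exists>y\<in>carrier (Delta2_grp l). y \<otimes>\<^bsub>Delta2_grp l\<^esub> x = \<one>\<^bsub>Delta2_grp l\<^esub>"
    using x ginv_props[OF assms] 
    by (intro bexI[of _ "(ginv l (fst x), ginv l (snd x))"]) (auto simp: Delta2_grp_def Delta2_def)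
qed

lemma invD: assumes "l \<in> {2,3}" "x \<in> Delta2 l"
  shows "inv\<^bsub>Delta2_grp l\<^esub> x = (ginv l (fst x), ginv l (snd x))"
proof (rule group.inv_equality[OF grpD[OF assms(1)]])
  obtain a b where x: "x = (a,b)" by (cases x)
  have a: "a \<in> GL2 l" and b: "b \<in> GL2 l" and dab: "mdet l a = mdet l b" using assms x by (auto simp: Delta2_def)
  show "x \<in> carrier (Delta2_grp l)" using assms by (simp add: Delta2_grp_def)
  show "(ginv l (fst x), ginv l (snd x)) \<in> carrier (Delta2_grp l)"
    using ginv_props[OF assms(1) a] ginv_props[OF assms(1) b] x dab by (simp add: Delta2_grp_def Delta2_def)
  show "(ginv l (fst x), ginv l (snd x)) \<otimes>\<^bsub>Delta2_grp l\<^esub> x = \<one>\<^bsub>Delta2_grp l\<^esub>"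
    using ginv_props[OF assms(1) a] ginv_props[OF assms(1) b] x by (simp add: Delta2_grp_def)
qed

lemma Fl2: "Fl 2 = {0,1}" by (auto simp: Fl_def)
lemma Fl3: "Fl 3 = {0,1,2}" by (auto simp: Fl_def)
definition Mid2 :: "mat2 set" where "Mid2 = {(0,1,1,0), (1,0,1,1), (1,1,0,1)}"
definition NoF2 :: "mat2 set" where "NoF2 = {(0,1,1,1), (1,1,1,0)}"
definition T2 :: "mat2 set" where "T2 = {(0,1,1,0), (1,0,1,1), (1,1,0,1)}"
definition SL2 :: "mat2 set" where "SL2 = {(0,1,1,0), (0,1,1,1), (1,0,0,1), (1,0,1,1), (1,1,0,1), (1,1,1,0)}"
lemma GL2_2_cases0: "a \<in> {0,1} \<Longrightarrow> b \<in> {0,1} \<Longrightarrow> c \<in> {0,1} \<Longrightarrow> d \<in> {0,1} \<Longrightarrow> mdet 2 (a,b,c,d) \<noteq> 0 \<Longrightarrow> (a,b,c,d) = mone \<or> (a,b,c,d) \<in> Mid2 \<or> (a,b,c,d) \<in> NoF2"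
  unfolding Mid2_def NoF2_def mone_def
  apply (simp only: insert_iff empty_iff simp_thms)
  apply (elim disjE)
  apply (simp_all only: mdet.simps)
  apply simp_all
  done
definition Mid3 :: "mat2 set" where "Mid3 = {(0,1,1,0), (0,1,2,2), (0,2,1,2), (0,2,2,0), (1,0,0,2), (1,0,1,1), (1,0,1,2), (1,0,2,1), (1,0,2,2), (1,1,0,1), (1,1,0,2), (1,2,0,1), (1,2,0,2), (2,0,0,1), (2,0,1,1), (2,0,2,1), (2,1,0,1), (2,1,2,0), (2,2,0,1), (2,2,1,0)}"
definition NoF3 :: "mat2 set" where "NoF3 = {(0,1,1,1), (0,1,1,2), (0,1,2,0), (0,1,2,1), (0,2,1,0), (0,2,1,1), (0,2,2,1), (0,2,2,2), (1,1,1,0), (1,1,1,2), (1,1,2,0), (1,1,2,1), (1,2,1,0), (1,2,1,1), (1,2,2,0), (1,2,2,2), (2,0,0,2), (2,0,1,2), (2,0,2,2), (2,1,0,2), (2,1,1,0), (2,1,1,1), (2,1,2,2), (2,2,0,2), (2,2,1,2), (2,2,2,0), (2,2,2,1)}"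
definition T3 :: "mat2 set" where "T3 = {(0,1,2,2), (0,2,1,2), (1,0,1,1), (1,0,2,1), (1,1,0,1), (1,2,0,1), (2,1,2,0), (2,2,1,0)}"
definition SL3 :: "mat2 set" where "SL3 = {(0,1,2,0), (0,1,2,1), (0,1,2,2), (0,2,1,0), (0,2,1,1), (0,2,1,2), (1,0,0,1), (1,0,1,1), (1,0,2,1), (1,1,0,1), (1,1,1,2), (1,1,2,0), (1,2,0,1), (1,2,1,0), (1,2,2,2), (2,0,0,2), (2,0,1,2), (2,0,2,2), (2,1,0,2), (2,1,1,1), (2,1,2,0), (2,2,0,2), (2,2,1,0), (2,2,2,1)}"
lemma GL2_3_cases0: "a \<in> {0,1,2} \<Longrightarrow> b \<in> {0,1,2} \<Longrightarrow> c \<in> {0,1,2} \<Longrightarrow> d \<in> {0,1,2} \<Longrightarrow> mdet 3 (a,b,c,d) \<noteq> 0 \<Longrightarrow> (a,b,c,d) = mone \<or> (a,b,c,d) \<in> Mid3 \<or> (a,b,c,d) \<in> NoF3"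
  unfolding Mid3_def NoF3_def mone_def
  apply (simp only: insert_iff empty_iff simp_thms)
  apply (elim disjE)
  apply (simp_all only: mdet.simps)
  apply simp_all
  done
lemma ker_2_0: "ker1 2 (0,1,1,0) = {(0,0), (1,1)}"
  by (auto simp: Fl2)
lemma ker_2_1: "ker1 2 (1,0,1,1) = {(0,0), (0,1)}"
  by (auto simp: Fl2)
lemma ker_2_2: "ker1 2 (1,1,0,1) = {(0,0), (1,0)}"
  by (auto simp: Fl2)
lemma ker_2_3: "ker1 2 (0,1,1,1) = {(0,0)}"
  by (auto simp: Fl2)
lemma ker_2_4: "ker1 2 (1,1,1,0) = {(0,0)}"
  by (auto simp: Fl2)
lemma ker_2_5: "ker1 2 (1,0,0,1) = {(0,0), (0,1), (1,0), (1,1)}"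
  by (auto simp: Fl2)
lemmas kers2 = ker_2_0 ker_2_1 ker_2_2 ker_2_3 ker_2_4 ker_2_5
lemma Mid2_card: "g \<in> Mid2 \<Longrightarrow> card (ker1 2 g) = 2"
  unfolding Mid2_def by (simp only: insert_iff empty_iff simp_thms, elim disjE, simp_all only: kers2, simp_all)
lemma NoF2_card: "g \<in> NoF2 \<Longrightarrow> card (ker1 2 g) = 1"
  unfolding NoF2_def by (simp only: insert_iff empty_iff simp_thms, elim disjE, simp_all only: kers2, simp_all)
lemma mone2_card: "card (ker1 2 mone) = 4"
  unfolding mone_def by (simp only: kers2, simp)
lemma MidT2: "g \<in> Mid2 \<Longrightarrow> mdet 2 g = 1 \<Longrightarrow> g \<in> T2"
  unfolding Mid2_def by (simp only: insert_iff empty_iff simp_thms, elim disjE, simp_all add: T2_def)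
lemma SL2_0: "a \<in> {0,1} \<Longrightarrow> b \<in> {0,1} \<Longrightarrow> c \<in> {0,1} \<Longrightarrow> d \<in> {0,1} \<Longrightarrow> mdet 2 (a,b,c,d) = 1 \<Longrightarrow> (a,b,c,d) \<in> SL2"
  unfolding SL2_def
  apply (simp only: insert_iff empty_iff simp_thms)
  apply (elim disjE)
  apply (simp_all only: mdet.simps)
  apply simp_all
  done
lemma SL2_sub: "g \<in> GL2 2 \<Longrightarrow> mdet 2 g = 1 \<Longrightarrow> g \<in> SL2"
proof -
  assume a: "g \<in> GL2 2" "mdet 2 g = 1"
  obtain a b c d where g: "g = (a,b,c,d)" by (cases g)
  have "a \<in> {0,1}" "b \<in> {0,1}" "c \<in> {0,1}" "d \<in> {0,1}" using a g by (auto simp: GL2_def Fl2)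
  from SL2_0[OF this] a g show ?thesis by simp
qed
lemma GL2_2_cases: "g \<in> GL2 2 \<Longrightarrow> g = mone \<or> g \<in> Mid2 \<or> g \<in> NoF2"
proof -
  assume a: "g \<in> GL2 2"
  obtain a b c d where g: "g = (a,b,c,d)" by (cases g)
  have "a \<in> {0,1}" "b \<in> {0,1}" "c \<in> {0,1}" "d \<in> {0,1}" "mdet 2 (a,b,c,d) \<noteq> 0" using a g by (auto simp: GL2_def Fl2)
  from GL2_2_cases0[OF this] g show ?thesis by simp
qed
lemma cube2a: "g \<in> Mid2 \<Longrightarrow> mmul 2 (mmul 2 g g) g = g"
  unfolding Mid2_def by (simp only: insert_iff empty_iff simp_thms, elim disjE, simp_all)
lemma cube2b: "g \<in> NoF2 \<Longrightarrow> mmul 2 (mmul 2 g g) g = mone"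
  unfolding NoF2_def mone_def by (simp only: insert_iff empty_iff simp_thms, elim disjE, simp_all)
lemma ker_3_0: "ker1 3 (0,1,1,0) = {(0,0), (1,1), (2,2)}"
  by (auto simp: Fl3)
lemma ker_3_1: "ker1 3 (0,1,2,2) = {(0,0), (1,1), (2,2)}"
  by (auto simp: Fl3)
lemma ker_3_2: "ker1 3 (0,2,1,2) = {(0,0), (1,2), (2,1)}"
  by (auto simp: Fl3)
lemma ker_3_3: "ker1 3 (0,2,2,0) = {(0,0), (1,2), (2,1)}"
  by (auto simp: Fl3)
lemma ker_3_4: "ker1 3 (1,0,0,2) = {(0,0), (1,0), (2,0)}"
  by (auto simp: Fl3)
lemma ker_3_5: "ker1 3 (1,0,1,1) = {(0,0), (0,1), (0,2)}"
  by (auto simp: Fl3)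
lemma ker_3_6: "ker1 3 (1,0,1,2) = {(0,0), (1,2), (2,1)}"
  by (auto simp: Fl3)
lemma ker_3_7: "ker1 3 (1,0,2,1) = {(0,0), (0,1), (0,2)}"
  by (auto simp: Fl3)
lemma ker_3_8: "ker1 3 (1,0,2,2) = {(0,0), (1,1), (2,2)}"
  by (auto simp: Fl3)
lemma ker_3_9: "ker1 3 (1,1,0,1) = {(0,0), (1,0), (2,0)}"
  by (auto simp: Fl3)
lemma ker_3_10: "ker1 3 (1,1,0,2) = {(0,0), (1,0), (2,0)}"
  by (auto simp: Fl3)
lemma ker_3_11: "ker1 3 (1,2,0,1) = {(0,0), (1,0), (2,0)}"
  by (auto simp: Fl3)
lemma ker_3_12: "ker1 3 (1,2,0,2) = {(0,0), (1,0), (2,0)}"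
  by (auto simp: Fl3)
lemma ker_3_13: "ker1 3 (2,0,0,1) = {(0,0), (0,1), (0,2)}"
  by (auto simp: Fl3)
lemma ker_3_14: "ker1 3 (2,0,1,1) = {(0,0), (0,1), (0,2)}"
  by (auto simp: Fl3)
lemma ker_3_15: "ker1 3 (2,0,2,1) = {(0,0), (0,1), (0,2)}"
  by (auto simp: Fl3)
lemma ker_3_16: "ker1 3 (2,1,0,1) = {(0,0), (1,2), (2,1)}"
  by (auto simp: Fl3)
lemma ker_3_17: "ker1 3 (2,1,2,0) = {(0,0), (1,2), (2,1)}"
  by (auto simp: Fl3)
lemma ker_3_18: "ker1 3 (2,2,0,1) = {(0,0), (1,1), (2,2)}"
  by (auto simp: Fl3)
lemma ker_3_19: "ker1 3 (2,2,1,0) = {(0,0), (1,1), (2,2)}"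
  by (auto simp: Fl3)
lemma ker_3_20: "ker1 3 (0,1,1,1) = {(0,0)}"
  by (auto simp: Fl3)
lemma ker_3_21: "ker1 3 (0,1,1,2) = {(0,0)}"
  by (auto simp: Fl3)
lemma ker_3_22: "ker1 3 (0,1,2,0) = {(0,0)}"
  by (auto simp: Fl3)
lemma ker_3_23: "ker1 3 (0,1,2,1) = {(0,0)}"
  by (auto simp: Fl3)
lemma ker_3_24: "ker1 3 (0,2,1,0) = {(0,0)}"
  by (auto simp: Fl3)
lemma ker_3_25: "ker1 3 (0,2,1,1) = {(0,0)}"
  by (auto simp: Fl3)
lemma ker_3_26: "ker1 3 (0,2,2,1) = {(0,0)}"
  by (auto simp: Fl3)
lemma ker_3_27: "ker1 3 (0,2,2,2) = {(0,0)}"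
  by (auto simp: Fl3)
lemma ker_3_28: "ker1 3 (1,1,1,0) = {(0,0)}"
  by (auto simp: Fl3)
lemma ker_3_29: "ker1 3 (1,1,1,2) = {(0,0)}"
  by (auto simp: Fl3)
lemma ker_3_30: "ker1 3 (1,1,2,0) = {(0,0)}"
  by (auto simp: Fl3)
lemma ker_3_31: "ker1 3 (1,1,2,1) = {(0,0)}"
  by (auto simp: Fl3)
lemma ker_3_32: "ker1 3 (1,2,1,0) = {(0,0)}"
  by (auto simp: Fl3)
lemma ker_3_33: "ker1 3 (1,2,1,1) = {(0,0)}"
  by (auto simp: Fl3)
lemma ker_3_34: "ker1 3 (1,2,2,0) = {(0,0)}"
  by (auto simp: Fl3)
lemma ker_3_35: "ker1 3 (1,2,2,2) = {(0,0)}"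
  by (auto simp: Fl3)
lemma ker_3_36: "ker1 3 (2,0,0,2) = {(0,0)}"
  by (auto simp: Fl3)
lemma ker_3_37: "ker1 3 (2,0,1,2) = {(0,0)}"
  by (auto simp: Fl3)
lemma ker_3_38: "ker1 3 (2,0,2,2) = {(0,0)}"
  by (auto simp: Fl3)
lemma ker_3_39: "ker1 3 (2,1,0,2) = {(0,0)}"
  by (auto simp: Fl3)
lemma ker_3_40: "ker1 3 (2,1,1,0) = {(0,0)}"
  by (auto simp: Fl3)
lemma ker_3_41: "ker1 3 (2,1,1,1) = {(0,0)}"
  by (auto simp: Fl3)
lemma ker_3_42: "ker1 3 (2,1,2,2) = {(0,0)}"
  by (auto simp: Fl3)
lemma ker_3_43: "ker1 3 (2,2,0,2) = {(0,0)}"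
  by (auto simp: Fl3)
lemma ker_3_44: "ker1 3 (2,2,1,2) = {(0,0)}"
  by (auto simp: Fl3)
lemma ker_3_45: "ker1 3 (2,2,2,0) = {(0,0)}"
  by (auto simp: Fl3)
lemma ker_3_46: "ker1 3 (2,2,2,1) = {(0,0)}"
  by (auto simp: Fl3)
lemma ker_3_47: "ker1 3 (1,0,0,1) = {(0,0), (0,1), (0,2), (1,0), (1,1), (1,2), (2,0), (2,1), (2,2)}"
  by (auto simp: Fl3)
lemmas kers3 = ker_3_0 ker_3_1 ker_3_2 ker_3_3 ker_3_4 ker_3_5 ker_3_6 ker_3_7 ker_3_8 ker_3_9 ker_3_10 ker_3_11 ker_3_12 ker_3_13 ker_3_14 ker_3_15 ker_3_16 ker_3_17 ker_3_18 ker_3_19 ker_3_20 ker_3_21 ker_3_22 ker_3_23 ker_3_24 ker_3_25 ker_3_26 ker_3_27 ker_3_28 ker_3_29 ker_3_30 ker_3_31 ker_3_32 ker_3_33 ker_3_34 ker_3_35 ker_3_36 ker_3_37 ker_3_38 ker_3_39 ker_3_40 ker_3_41 ker_3_42 ker_3_43 ker_3_44 ker_3_45 ker_3_46 ker_3_47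
lemma Mid3_card: "g \<in> Mid3 \<Longrightarrow> card (ker1 3 g) = 3"
  unfolding Mid3_def by (simp only: insert_iff empty_iff simp_thms, elim disjE, simp_all only: kers3, simp_all)
lemma NoF3_card: "g \<in> NoF3 \<Longrightarrow> card (ker1 3 g) = 1"
  unfolding NoF3_def by (simp only: insert_iff empty_iff simp_thms, elim disjE, simp_all only: kers3, simp_all)
lemma mone3_card: "card (ker1 3 mone) = 9"
  unfolding mone_def by (simp only: kers3, simp)
lemma MidT3: "g \<in> Mid3 \<Longrightarrow> mdet 3 g = 1 \<Longrightarrow> g \<in> T3"
  unfolding Mid3_def by (simp only: insert_iff empty_iff simp_thms, elim disjE, simp_all add: T3_def)
lemma SL3_0: "a \<in> {0,1,2} \<Longrightarrow> b \<in> {0,1,2} \<Longrightarrow> c \<in> {0,1,2} \<Longrightarrow> d \<in> {0,1,2} \<Longrightarrow> mdet 3 (a,b,c,d) = 1 \<Longrightarrow> (a,b,c,d) \<in> SL3"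
  unfolding SL3_def
  apply (simp only: insert_iff empty_iff simp_thms)
  apply (elim disjE)
  apply (simp_all only: mdet.simps)
  apply simp_all
  done
lemma SL3_sub: "g \<in> GL2 3 \<Longrightarrow> mdet 3 g = 1 \<Longrightarrow> g \<in> SL3"
proof -
  assume a: "g \<in> GL2 3" "mdet 3 g = 1"
  obtain a b c d where g: "g = (a,b,c,d)" by (cases g)
  have "a \<in> {0,1,2}" "b \<in> {0,1,2}" "c \<in> {0,1,2}" "d \<in> {0,1,2}" using a g by (auto simp: GL2_def Fl3)
  from SL3_0[OF this] a g show ?thesis by simp
qed
lemma GL2_3_cases: "g \<in> GL2 3 \<Longrightarrow> g = mone \<or> g \<in> Mid3 \<or> g \<in> NoF3"
proof -
  assume a: "g \<in> GL2 3"
  obtain a b c d where g: "g = (a,b,c,d)" by (cases g)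
  have "a \<in> {0,1,2}" "b \<in> {0,1,2}" "c \<in> {0,1,2}" "d \<in> {0,1,2}" "mdet 3 (a,b,c,d) \<noteq> 0" using a g by (auto simp: GL2_def Fl3)
  from GL2_3_cases0[OF this] g show ?thesis by simp
qed
lemma gen_SL2:
  assumes mulH: "\<And>x y. x \<in> H \<Longrightarrow> y \<in> H \<Longrightarrow> mmul 2 x y \<in> H"
    and conjH: "\<And>x h. x \<in> H \<Longrightarrow> h \<in> GL2 2 \<Longrightarrow> mmul 2 (mmul 2 h x) (ginv 2 h) \<in> H"
    and t: "t \<in> T2" "t \<in> H"
  shows "SL2 \<subseteq> H"
proof -
  have cj: "\<And>x h y. x \<in> H \<Longrightarrow> h \<in> GL2 2 \<Longrightarrow> mmul 2 (mmul 2 h x) (ginv 2 h) = y \<Longrightarrow> y \<in> H"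
    using conjH by blast
  have ml: "\<And>x z y. x \<in> H \<Longrightarrow> z \<in> H \<Longrightarrow> mmul 2 x z = y \<Longrightarrow> y \<in> H"
    using mulH by blast

  have t0: "t = (0,1,1,0) \<Longrightarrow> (1,1,0,1) \<in> H" by (rule cj[OF t(2), where h="(0,1,1,1)"]) (simp_all add: GL2_def Fl_def ginv_def)
  have t1: "t = (1,0,1,1) \<Longrightarrow> (1,1,0,1) \<in> H" by (rule cj[OF t(2), where h="(0,1,1,0)"]) (simp_all add: GL2_def Fl_def ginv_def)
  have t2: "t = (1,1,0,1) \<Longrightarrow> (1,1,0,1) \<in> H" by (rule cj[OF t(2), where h="(1,0,0,1)"]) (simp_all add: GL2_def Fl_def ginv_def)
  have h0: "(1,1,0,1) \<in> H" using t(1) t0 t1 t2 unfolding T2_def by blast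
  have h1: "(1,0,1,1) \<in> H" by (rule cj[OF h0, where h="(0,1,1,0)"]) (simp_all add: GL2_def Fl_def ginv_def)
  have h2: "(0,1,1,0) \<in> H" by (rule cj[OF h0, where h="(1,0,1,1)"]) (simp_all add: GL2_def Fl_def ginv_def)
  have h3: "(1,0,0,1) \<in> H" by (rule ml[OF h0 h0]) simp
  have h4: "(0,1,1,1) \<in> H" by (rule ml[OF h0 h1]) simp
  have h5: "(1,1,1,0) \<in> H" by (rule ml[OF h0 h2]) simp
  show ?thesis unfolding SL2_def using h0 h1 h2 h3 h4 h5 by simp
qed
lemma gen_SL3:
  assumes mulH: "\<And>x y. x \<in> H \<Longrightarrow> y \<in> H \<Longrightarrow> mmul 3 x y \<in> H"
    and conjH: "\<And>x h. x \<in> H \<Longrightarrow> h \<in> GL2 3 \<Longrightarrow> mmul 3 (mmul 3 h x) (ginv 3 h) \<in> H"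
    and t: "t \<in> T3" "t \<in> H"
  shows "SL3 \<subseteq> H"
proof -
  have cj: "\<And>x h y. x \<in> H \<Longrightarrow> h \<in> GL2 3 \<Longrightarrow> mmul 3 (mmul 3 h x) (ginv 3 h) = y \<Longrightarrow> y \<in> H"
    using conjH by blast
  have ml: "\<And>x z y. x \<in> H \<Longrightarrow> z \<in> H \<Longrightarrow> mmul 3 x z = y \<Longrightarrow> y \<in> H"
    using mulH by blast

  have t0: "t = (0,1,2,2) \<Longrightarrow> (1,1,0,1) \<in> H" by (rule cj[OF t(2), where h="(0,1,2,1)"]) (simp_all add: GL2_def Fl_def ginv_def)
  have t1: "t = (0,2,1,2) \<Longrightarrow> (1,1,0,1) \<in> H" by (rule cj[OF t(2), where h="(0,1,1,1)"]) (simp_all add: GL2_def Fl_def ginv_def)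
  have t2: "t = (1,0,1,1) \<Longrightarrow> (1,1,0,1) \<in> H" by (rule cj[OF t(2), where h="(0,1,1,0)"]) (simp_all add: GL2_def Fl_def ginv_def)
  have t3: "t = (1,0,2,1) \<Longrightarrow> (1,1,0,1) \<in> H" by (rule cj[OF t(2), where h="(0,1,2,0)"]) (simp_all add: GL2_def Fl_def ginv_def)
  have t4: "t = (1,1,0,1) \<Longrightarrow> (1,1,0,1) \<in> H" by (rule cj[OF t(2), where h="(1,0,0,1)"]) (simp_all add: GL2_def Fl_def ginv_def)
  have t5: "t = (1,2,0,1) \<Longrightarrow> (1,1,0,1) \<in> H" by (rule cj[OF t(2), where h="(1,0,0,2)"]) (simp_all add: GL2_def Fl_def ginv_def)
  have t6: "t = (2,1,2,0) \<Longrightarrow> (1,1,0,1) \<in> H" by (rule cj[OF t(2), where h="(0,1,2,2)"]) (simp_all add: GL2_def Fl_def ginv_def)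
  have t7: "t = (2,2,1,0) \<Longrightarrow> (1,1,0,1) \<in> H" by (rule cj[OF t(2), where h="(0,1,1,2)"]) (simp_all add: GL2_def Fl_def ginv_def)
  have h0: "(1,1,0,1) \<in> H" using t(1) t0 t1 t2 t3 t4 t5 t6 t7 unfolding T3_def by blast
  have h1: "(1,0,1,1) \<in> H" by (rule cj[OF h0, where h="(0,1,1,0)"]) (simp_all add: GL2_def Fl_def ginv_def)
  have h2: "(1,0,2,1) \<in> H" by (rule cj[OF h0, where h="(0,1,2,0)"]) (simp_all add: GL2_def Fl_def ginv_def)
  have h3: "(1,2,0,1) \<in> H" by (rule cj[OF h0, where h="(1,0,0,2)"]) (simp_all add: GL2_def Fl_def ginv_def)
  have h4: "(0,1,2,2) \<in> H" by (rule cj[OF h0, where h="(1,0,1,1)"]) (simp_all add: GL2_def Fl_def ginv_def)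
  have h5: "(2,2,1,0) \<in> H" by (rule cj[OF h0, where h="(1,0,1,2)"]) (simp_all add: GL2_def Fl_def ginv_def)
  have h6: "(2,1,2,0) \<in> H" by (rule cj[OF h0, where h="(1,0,2,1)"]) (simp_all add: GL2_def Fl_def ginv_def)
  have h7: "(0,2,1,2) \<in> H" by (rule cj[OF h0, where h="(1,0,2,2)"]) (simp_all add: GL2_def Fl_def ginv_def)
  have h8: "(2,1,1,1) \<in> H" by (rule ml[OF h0 h1]) simp
  have h9: "(0,1,2,1) \<in> H" by (rule ml[OF h0 h2]) simp
  have h10: "(1,0,0,1) \<in> H" by (rule ml[OF h0 h3]) simp
  have h11: "(2,0,2,2) \<in> H" by (rule ml[OF h0 h4]) simp
  have h12: "(0,2,1,0) \<in> H" by (rule ml[OF h0 h5]) simp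
  have h13: "(1,1,2,0) \<in> H" by (rule ml[OF h0 h6]) simp
  have h14: "(1,1,1,2) \<in> H" by (rule ml[OF h0 h7]) simp
  have h15: "(1,2,1,0) \<in> H" by (rule ml[OF h1 h3]) simp
  have h16: "(0,1,2,0) \<in> H" by (rule ml[OF h1 h4]) simp
  have h17: "(2,2,0,2) \<in> H" by (rule ml[OF h1 h5]) simp
  have h18: "(0,2,1,1) \<in> H" by (rule ml[OF h1 h7]) simp
  have h19: "(2,1,0,2) \<in> H" by (rule ml[OF h1 h8]) simp
  have h20: "(2,0,1,2) \<in> H" by (rule ml[OF h1 h11]) simp
  have h21: "(1,2,2,2) \<in> H" by (rule ml[OF h2 h3]) simp
  have h22: "(2,2,2,1) \<in> H" by (rule ml[OF h2 h5]) simp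
  have h23: "(2,0,0,2) \<in> H" by (rule ml[OF h2 h11]) simp
  show ?thesis unfolding SL3_def using h0 h1 h2 h3 h4 h5 h6 h7 h8 h9 h10 h11 h12 h13 h14 h15 h16 h17 h18 h19 h20 h21 h22 h23 by simp
qed

definition "MidL l = (if l = 2 then Mid2 else Mid3)"
definition "NoFL l = (if l = 2 then NoF2 else NoF3)"
definition "TL l = (if l = 2 then T2 else T3)"
definition "SLL l = (if l = 2 then SL2 else SL3)"

lemma dim1_eq: assumes "l \<ge> 2" "card (ker1 l g) = nat l ^ d" shows "dim1 l g = d"
  unfolding dim1_def
proof (rule the_equality)
  show "card (ker1 l g) = nat l ^ d" by fact
  fix d' assume "card (ker1 l g) = nat l ^ d'"
  with assms have "nat l ^ d' = nat l ^ d" by simp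
  moreover have "1 < nat l" using assms by simp
  ultimately show "d' = d" using power_inject_exp by blast
qed

lemma dimcases: assumes l: "l \<in> {2,3}" and g: "g \<in> GL2 l"
  shows "(g = mone \<and> dim1 l g = 2) \<or> (g \<in> MidL l \<and> dim1 l g = 1) \<or> (g \<in> NoFL l \<and> dim1 l g = 0)"
proof -
  have l2: "l \<ge> 2" using l by auto
  have c: "g = mone \<or> g \<in> MidL l \<or> g \<in> NoFL l"
    using l g GL2_2_cases[of g] GL2_3_cases[of g] by (auto simp: MidL_def NoFL_def)
  have "card (ker1 l mone) = nat l ^ 2" using l mone2_card mone3_card by (auto simp del: ker1.simps)
  moreover have "g \<in> MidL l \<Longrightarrow> card (ker1 l g) = nat l ^ 1" using l Mid2_card[of g] Mid3_card[of g] by (auto simp del: ker1.simps simp: MidL_def)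
  moreover have "g \<in> NoFL l \<Longrightarrow> card (ker1 l g) = nat l ^ 0" using l NoF2_card[of g] NoF3_card[of g] by (auto simp del: ker1.simps simp: NoFL_def)
  ultimately show ?thesis using c dim1_eq[OF l2] by blast
qed

lemma MidT: "l \<in> {2,3} \<Longrightarrow> g \<in> MidL l \<Longrightarrow> mdet l g = 1 \<Longrightarrow> g \<in> TL l"
  using MidT2[of g] MidT3[of g] by (auto simp: MidL_def TL_def)

lemma SL_sub: "l \<in> {2,3} \<Longrightarrow> g \<in> GL2 l \<Longrightarrow> mdet l g = 1 \<Longrightarrow> g \<in> SLL l"
  using SL2_sub[of g] SL3_sub[of g] by (auto simp: SLL_def)

lemma gen_SL: assumes "l \<in> {2,3}"
  and "\<And>x y. x \<in> H \<Longrightarrow> y \<in> H \<Longrightarrow> mmul l x y \<in> H"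
  and "\<And>x h. x \<in> H \<Longrightarrow> h \<in> GL2 l \<Longrightarrow> mmul l (mmul l h x) (ginv l h) \<in> H"
  and "t \<in> TL l" "t \<in> H"
  shows "SLL l \<subseteq> H"
  using assms gen_SL2[of H t] gen_SL3[of H t] by (auto simp: TL_def SLL_def)

lemma mdet_mone: "l \<in> {2,3} \<Longrightarrow> mdet l mone = 1"
  by (auto simp: mone_def)

lemma key:
  assumes l: "l \<in> {2,3}" and sg: "subgroup G (Delta2_grp l)"
    and p1: "fst ` G = GL2 l" and p2: "snd ` G = GL2 l"
    and t: "t \<in> TL l" "(t, mone) \<in> G"
  shows "G = Delta2 l"
proof -
  interpret D: group "Delta2_grp l" by (rule grpD[OF l])
  have l0: "l > 0" using l by auto
  have GD: "G \<subseteq> Delta2 l" using subgroup.subset[OF sg] by (simp add: Delta2_grp_def)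
  have mulG: "\<And>x y. x \<in> G \<Longrightarrow> y \<in> G \<Longrightarrow> (mmul l (fst x) (fst y), mmul l (snd x) (snd y)) \<in> G"
    using subgroup.m_closed[OF sg] by (simp add: Delta2_grp_def)
  have invG: "(ginv l (fst x), ginv l (snd x)) \<in> G" if x: "x \<in> G" for x
  proof -
    have "inv\<^bsub>Delta2_grp l\<^esub> x \<in> G" using subgroup.m_inv_closed[OF sg x] .
    moreover have "inv\<^bsub>Delta2_grp l\<^esub> x = (ginv l (fst x), ginv l (snd x))" using invD[OF l] GD x by blast
    ultimately show ?thesis by simp
  qed
  define H where "H = {a. (a, mone) \<in> G}"
  have mmone: "mmul l mone mone = mone" using mone_mul[OF l0 mone_GL2[OF l]] by simp
  have mulH: "\<And>x y. x \<in> H \<Longrightarrow> y \<in> H \<Longrightarrow> mmul l x y \<in> H"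
    using mulG mmone unfolding H_def by fastforce
  have conjH: "mmul l (mmul l h x) (ginv l h) \<in> H" if x: "x \<in> H" and h: "h \<in> GL2 l" for x h
  proof -
    have "h \<in> fst ` G" using h p1 by simp
    then obtain y where y: "y \<in> G" "h = fst y" by blast
    obtain h' where hG: "(h,h') \<in> G" using y by (metis prod.collapse)
    then have h': "h' \<in> GL2 l" using GD by (auto simp: Delta2_def)
    have "(mmul l h x, mmul l h' mone) \<in> G" using mulG[OF hG] x unfolding H_def by fastforce
    from mulG[OF this invG[OF hG]]
    have "(mmul l (mmul l h x) (ginv l h), mmul l (mmul l h' mone) (ginv l h')) \<in> G" by simp
    then show ?thesis unfolding H_def using mone_mul[OF l0 h'] ginv_props[OF l h'] by simp
  qed
  have SLH: "SLL l \<subseteq> H"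
    by (rule gen_SL[OF l mulH conjH t(1)]) (use t(2) H_def in auto)
  show ?thesis
  proof
    show "G \<subseteq> Delta2 l" by (rule GD)
    show "Delta2 l \<subseteq> G"
    proof
      fix x assume x: "x \<in> Delta2 l"
      obtain a b where ab: "x = (a,b)" by (cases x)
      have "b \<in> snd ` G" using x ab p2 by (auto simp: Delta2_def)
      then obtain c where cG: "(c,b) \<in> G" by force
      have xc: "x \<in> carrier (Delta2_grp l)" using x by (simp add: Delta2_grp_def)
      have cc: "(c,b) \<in> carrier (Delta2_grp l)" using cG GD by (auto simp: Delta2_grp_def)
      define k where "k = x \<otimes>\<^bsub>Delta2_grp l\<^esub> inv\<^bsub>Delta2_grp l\<^esub> (c,b)"
      have kc: "k \<in> carrier (Delta2_grp l)" unfolding k_def using xc cc by simp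
      have bG: "b \<in> GL2 l" using x ab by (auto simp: Delta2_def)
      have "k = (mmul l a (ginv l c), mmul l b (ginv l b))"
        unfolding k_def using invD[OF l] cc ab by (simp add: Delta2_grp_def)
      then have k: "k = (mmul l a (ginv l c), mone)" using ginv_props[OF l bG] by simp
      then have "fst k \<in> GL2 l" "mdet l (fst k) = 1" using kc mdet_mone[OF l] by (auto simp: Delta2_grp_def Delta2_def)
      then have "fst k \<in> H" using SL_sub[OF l] SLH by blast
      then have kG: "k \<in> G" unfolding H_def using k by simp
      have "k \<otimes>\<^bsub>Delta2_grp l\<^esub> (c,b) \<in> G" using subgroup.m_closed[OF sg kG cG] .
      moreover have "k \<otimes>\<^bsub>Delta2_grp l\<^esub> (c,b) = x"
        unfolding k_def using xc cc by (simp add: D.m_assoc)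
      ultimately show "x \<in> G" by simp
    qed
  qed
qed

lemma key2:
  assumes l: "l \<in> {2,3}" and sg: "subgroup G (Delta2_grp l)"
    and p1: "fst ` G = GL2 l" and p2: "snd ` G = GL2 l"
    and t: "t \<in> TL l" "(mone, t) \<in> G"
  shows "G = Delta2 l"
proof -
  interpret D: group "Delta2_grp l" by (rule grpD[OF l])
  define sw where "sw = (\<lambda>(x::mat2,y::mat2). (y,x))"
  have swsw: "\<And>z. sw (sw z) = z" unfolding sw_def by auto
  have GD: "G \<subseteq> Delta2 l" using subgroup.subset[OF sg] by (simp add: Delta2_grp_def)
  have swD: "\<And>z. z \<in> Delta2 l \<Longrightarrow> sw z \<in> Delta2 l" unfolding sw_def Delta2_def by auto
  have sg2: "subgroup (sw ` G) (Delta2_grp l)"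
  proof (rule D.subgroupI)
    show "sw ` G \<subseteq> carrier (Delta2_grp l)" using GD swD by (auto simp: Delta2_grp_def)
    show "sw ` G \<noteq> {}" using t(2) by auto
  next
    fix a assume "a \<in> sw ` G"
    then obtain z where z: "z \<in> G" "a = sw z" by blast
    have "inv\<^bsub>Delta2_grp l\<^esub> z \<in> G" using subgroup.m_inv_closed[OF sg z(1)] .
    moreover have "inv\<^bsub>Delta2_grp l\<^esub> z = (ginv l (fst z), ginv l (snd z))" using invD[OF l] GD z by blast
    moreover have "inv\<^bsub>Delta2_grp l\<^esub> a = (ginv l (snd z), ginv l (fst z))"
      using invD[OF l] GD z swD by (auto simp: sw_def split: prod.splits)
    ultimately show "inv\<^bsub>Delta2_grp l\<^esub> a \<in> sw ` G" using z
      by (auto simp: sw_def image_iff split: prod.splits intro!: bexI[of _ "(ginv l (fst z), ginv l (snd z))"])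
  next
    fix a b assume "a \<in> sw ` G" "b \<in> sw ` G"
    then obtain z w where z: "z \<in> G" "a = sw z" "w \<in> G" "b = sw w" by blast
    have "z \<otimes>\<^bsub>Delta2_grp l\<^esub> w \<in> G" using subgroup.m_closed[OF sg z(1) z(3)] .
    moreover have "a \<otimes>\<^bsub>Delta2_grp l\<^esub> b = sw (z \<otimes>\<^bsub>Delta2_grp l\<^esub> w)"
      using z by (auto simp: sw_def Delta2_grp_def split: prod.splits)
    ultimately show "a \<otimes>\<^bsub>Delta2_grp l\<^esub> b \<in> sw ` G" by simp
  qed
  have "fst ` sw ` G = snd ` G" "snd ` sw ` G = fst ` G"
    by (force simp: sw_def image_iff)+
  moreover have "(t, mone) \<in> sw ` G" using t(2) by (force simp: sw_def image_iff)
  ultimately have "sw ` G = Delta2 l" using key[OF l sg2 _ _ t(1)] p1 p2 by simp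
  then have "sw ` sw ` G = sw ` Delta2 l" by simp
  moreover have "sw ` sw ` G = G" using swsw by (simp add: image_image)
  moreover have "sw ` Delta2 l = Delta2 l" using swD swsw by (metis image_subset_iff subset_antisym subsetI image_eqI)
  ultimately show ?thesis by simp
qed

lemma t0_facts: "l \<in> {2,3} \<Longrightarrow> dim1 l (1,1,0,1) = 1 \<and> dim1 l mone = 2 \<and> (mone, (1,1,0,1)) \<in> Delta2 l"
proof -
  assume l: "l \<in> {2,3}"
  have c1: "card (ker1 l (1,1,0,1)) = nat l ^ 1" using l Mid2_card[of "(1,1,0,1)"] Mid3_card[of "(1,1,0,1)"]
    by (auto simp del: ker1.simps simp: Mid2_def Mid3_def)
  have c2: "card (ker1 l mone) = nat l ^ 2" using l mone2_card mone3_card by (auto simp del: ker1.simps)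
  have "(mone, (1,1,0,1)) \<in> Delta2 l" using l by (auto simp: Delta2_def GL2_def Fl_def mone_def)
  then show ?thesis using dim1_eq[OF _ c1] dim1_eq[OF _ c2] l by auto
qed

theorem lemma6p1:
  fixes l :: int and G :: "(mat2 \<times> mat2) set"
  assumes "l \<in> {2, 3}"
    and "subgroup G (Delta2_grp l)"
    and "fst ` G = GL2 l"
    and "snd ` G = GL2 l"
  shows "G = Delta2 l \<longleftrightarrow>
    (\<exists>(g1, g2) \<in> G. (dim1 l g1, dim1 l g2) \<in>
       (if l = 2 then {(0,1),(1,0),(1,2),(2,1)} else {(1,2),(2,1)}))"
proof
  assume "G = Delta2 l"
  then show "\<exists>(g1, g2) \<in> G. (dim1 l g1, dim1 l g2) \<in>
       (if l = 2 then {(0,1),(1,0),(1,2),(2,1)} else {(1,2),(2,1)})"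
    using t0_facts[OF assms(1)] by (intro bexI[of _ "(mone, (1,1,0,1))"]) auto
next
  assume "\<exists>(g1, g2) \<in> G. (dim1 l g1, dim1 l g2) \<in>
       (if l = 2 then {(0,1),(1,0),(1,2),(2,1)} else {(1,2),(2,1)})"
  then obtain g1 g2 where gG: "(g1,g2) \<in> G" and dd: "(dim1 l g1, dim1 l g2) \<in>
       (if l = 2 then {(0,1),(1,0),(1,2),(2,1)} else {(1,2),(2,1)})" by blast
  note l = assms(1)
  have GD: "G \<subseteq> Delta2 l" using subgroup.subset[OF assms(2)] by (simp add: Delta2_grp_def)
  then have g1: "g1 \<in> GL2 l" and g2: "g2 \<in> GL2 l" and dt: "mdet l g1 = mdet l g2"
    using gG by (auto simp: Delta2_def)
  note c1 = dimcases[OF l g1] and c2 = dimcases[OF l g2]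
  note K1 = key[OF l assms(2) assms(3) assms(4)] and K2 = key2[OF l assms(2) assms(3) assms(4)]
  have case12: "G = Delta2 l" if "dim1 l g1 = 1" "dim1 l g2 = 2"
  proof -
    have "g2 = mone" "g1 \<in> MidL l" using c1 c2 that by auto
    then have "g1 \<in> TL l" using MidT[OF l] dt mdet_mone[OF l] by simp
    then show ?thesis using K1 gG \<open>g2 = mone\<close> by simp
  qed
  have case21: "G = Delta2 l" if "dim1 l g1 = 2" "dim1 l g2 = 1"
  proof -
    have "g1 = mone" "g2 \<in> MidL l" using c1 c2 that by auto
    then have "g2 \<in> TL l" using MidT[OF l] dt mdet_mone[OF l] by simp
    then show ?thesis using K2 gG \<open>g1 = mone\<close> by simp
  qed
  show "G = Delta2 l"
  proof (cases "l = 2")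
    case False
    then show ?thesis using dd case12 case21 by auto
  next
    case True
    have cube: "(mmul l (mmul l g1 g1) g1, mmul l (mmul l g2 g2) g2) \<in> G"
      using subgroup.m_closed[OF assms(2) subgroup.m_closed[OF assms(2) gG gG] gG] by (simp add: Delta2_grp_def)
    have det1: "mdet 2 g = 1" if "g \<in> GL2 2" for g
      using that by (cases g) (auto simp: GL2_def Fl_def)
    have case01: "G = Delta2 l" if "dim1 l g1 = 0" "dim1 l g2 = 1"
    proof -
      have "g1 \<in> NoF2" "g2 \<in> Mid2" using c1 c2 that True by (auto simp: MidL_def NoFL_def)
      then have "(mone, g2) \<in> G" using cube cube2a cube2b True by simp
      moreover have "g2 \<in> TL l" using MidT[OF l] \<open>g2 \<in> Mid2\<close> det1 g2 True by (simp add: MidL_def)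
      ultimately show ?thesis using K2 by simp
    qed
    have case10: "G = Delta2 l" if "dim1 l g1 = 1" "dim1 l g2 = 0"
    proof -
      have "g2 \<in> NoF2" "g1 \<in> Mid2" using c1 c2 that True by (auto simp: MidL_def NoFL_def)
      then have "(g1, mone) \<in> G" using cube cube2a cube2b True by simp
      moreover have "g1 \<in> TL l" using MidT[OF l] \<open>g1 \<in> Mid2\<close> det1 g1 True by (simp add: MidL_def)
      ultimately show ?thesis using K1 by simp
    qed
    show ?thesis using dd True case12 case21 case01 case10 by auto
  qed
qed


end
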